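(* For every integer $d\ge 1$ there exist $q_0=q_0(d)>\frac{1}{d+1}$ and constants $c_1,c_2>0$ depending only on $d$ such that the following holds. If $G=(V,E)$ is a finite connected simple graph of maximal degree $d$, $p\in(0,1)$ and $q:=1-p\le q_0$, then the stationary distribution $\pi$ of the Bak–Sneppen model on $G$ with parameter $p$ satisfies, for every $k\ge 0$, \[ \pi\big(\eta:\ |\{x\in V:\eta_x=0\}|>k\big)\le c_1e^{-c_2k}. \]
   Context: Let $G=(V,E)$ be a finite connected simple graph (no loops, no multiple edges) and $p\in(0,1)$. The (continuous-time, discrete-valued) Bak–Sneppen model on $G$ with parameter $p$ is the continuous-time Markov process $\eta(t)\in\{0,1\}^V$ defined as follows. Each vertex $x$ carries an independent rate-$1$ Poisson clock. When the clock at $x$ rings: if $\eta_x=0$, or if $\eta_y=1$ for all $y\in V$, then the values $\eta_z$ for all $z$ in the neighbourhood $\{x\}\cup\{y:y\sim x\}$ are replaced by independent Bernoulli$(p)$ random variables (value $1$ with probability $p$, value $0$ with probability $q=1-p$); otherwise nothing happens. This is an irreducible finite Markov chain; $\pi$ is its stationary distribution. *)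

theory Defs
  imports Complex_Main
begin

text \<open>Finite connected simple graph on vertex set V (vertices are natural numbers,
  which covers every finite graph up to isomorphism), with adjacency relation E.\<close>
definition conn_simple_graph :: "nat set \<Rightarrow> (nat \<Rightarrow> nat \<Rightarrow> bool) \<Rightarrow> bool" where
  "conn_simple_graph V E \<longleftrightarrow>
     finite V \<and> V \<noteq> {} \<and>
     (\<forall>x y. E x y \<longrightarrow> x \<in> V \<and> y \<in> V) \<and>
     (\<forall>x y. E x y \<longrightarrow> E y x) \<and>
     (\<forall>x. \<not> E x x) \<and>
     (\<forall>x\<in>V. \<forall>y\<in>V. E\<^sup>*\<^sup>* x y)"

definition max_degree :: "nat set \<Rightarrow> (nat \<Rightarrow> nat \<Rightarrow> bool) \<Rightarrow> nat" where
  "max_degree V E = Max ((\<lambda>x. card {y \<in> V. E x y}) ` V)"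

definition nbhd :: "nat set \<Rightarrow> (nat \<Rightarrow> nat \<Rightarrow> bool) \<Rightarrow> nat \<Rightarrow> nat set" where
  "nbhd V E x = insert x {y \<in> V. E x y}"

text \<open>Configurations: \<open>\<eta> x = True\<close> encodes value 1, \<open>False\<close> encodes value 0;
  configurations are fixed to False outside V.\<close>
definition configs :: "nat set \<Rightarrow> (nat \<Rightarrow> bool) set" where
  "configs V = {\<eta>. \<forall>x. x \<notin> V \<longrightarrow> \<not> \<eta> x}"

text \<open>Jump rate of the Bak--Sneppen chain from \<eta> to \<eta>': sum over vertices x whose
  rate-1 clock ring is effective at \<eta>, times the probability that independent
  Bernoulli(p) resampling of the closed neighbourhood of x produces \<eta>'.\<close>
definition bs_rate :: "nat set \<Rightarrow> (nat \<Rightarrow> nat \<Rightarrow> bool) \<Rightarrow> real \<Rightarrow>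
    (nat \<Rightarrow> bool) \<Rightarrow> (nat \<Rightarrow> bool) \<Rightarrow> real" where
  "bs_rate V E p \<eta> \<eta>' =
     (\<Sum>x\<in>V. if (\<not> \<eta> x \<or> (\<forall>y\<in>V. \<eta> y)) \<and> (\<forall>z. z \<notin> nbhd V E x \<longrightarrow> \<eta>' z = \<eta> z)
             then (\<Prod>z\<in>nbhd V E x. if \<eta>' z then p else 1 - p)
             else 0)"

definition bs_stationary :: "nat set \<Rightarrow> (nat \<Rightarrow> nat \<Rightarrow> bool) \<Rightarrow> real \<Rightarrow>
    ((nat \<Rightarrow> bool) \<Rightarrow> real) \<Rightarrow> bool" where
  "bs_stationary V E p \<pi> \<longleftrightarrow>
     (\<forall>\<eta>\<in>configs V. \<pi> \<eta> \<ge> 0) \<and>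
     (\<Sum>\<eta>\<in>configs V. \<pi> \<eta>) = 1 \<and>
     (\<forall>\<eta>'\<in>configs V.
        (\<Sum>\<eta>\<in>configs V. \<pi> \<eta> * bs_rate V E p \<eta> \<eta>') =
        \<pi> \<eta>' * (\<Sum>\<eta>\<in>configs V. bs_rate V E p \<eta>' \<eta>))"

definition zeros :: "nat set \<Rightarrow> (nat \<Rightarrow> bool) \<Rightarrow> nat set" where
  "zeros V \<eta> = {x \<in> V. \<not> \<eta> x}"

end

theory Submission
  imports Defs
begin

definition fset :: "nat set \<Rightarrow> (nat \<Rightarrow> bool) \<Rightarrow> (nat \<Rightarrow> bool) set" where
  "fset A \<eta>0 = {\<eta>'. \<forall>z. z \<notin> A \<longrightarrow> \<eta>' z = \<eta>0 z}"

lemma fset_img: "fset A \<eta>0 = (\<lambda>S z. if z \<in> A then z \<in> S else \<eta>0 z) ` Pow A"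
proof
  show "fset A \<eta>0 \<subseteq> (\<lambda>S z. if z \<in> A then z \<in> S else \<eta>0 z) ` Pow A"
  proof
    fix \<eta> assume h: "\<eta> \<in> fset A \<eta>0"
    have "\<eta> = (\<lambda>z. if z \<in> A then z \<in> {y\<in>A. \<eta> y} else \<eta>0 z)"
      using h by (auto simp: fset_def)
    then show "\<eta> \<in> (\<lambda>S z. if z \<in> A then z \<in> S else \<eta>0 z) ` Pow A" by blast
  qed
qed (auto simp: fset_def)

lemma fset_finite: "finite A \<Longrightarrow> finite (fset A \<eta>0)"
  by (simp add: fset_img)

lemma fset_insert:
  assumes "a \<notin> A"
  shows "fset (insert a A) \<eta>0 = fset A (\<eta>0(a:=True)) \<union> fset A (\<eta>0(a:=False))"
  using assms by (auto simp: fset_def)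

lemma sum_prod_fset:
  fixes h :: "nat \<Rightarrow> bool \<Rightarrow> real"
  assumes "finite A"
  shows "(\<Sum>\<eta>'\<in>fset A \<eta>0. \<Prod>z\<in>A. h z (\<eta>' z)) = (\<Prod>z\<in>A. h z True + h z False)"
  using assms
proof (induction A arbitrary: \<eta>0 rule: finite_induct)
  case empty
  have "fset {} \<eta>0 = {\<eta>0}" by (auto simp: fset_def)
  then show ?case by simp
next
  case (insert a A)
  have disj: "fset A (\<eta>0(a:=True)) \<inter> fset A (\<eta>0(a:=False)) = {}"
    using insert.hyps by (auto simp: fset_def)
  have eq: "(\<Sum>\<eta>'\<in>fset A (\<eta>0(a:=b)). \<Prod>z\<in>insert a A. h z (\<eta>' z))
      = h a b * (\<Prod>z\<in>A. h z True + h z False)" for b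
  proof -
    have "(\<Sum>\<eta>'\<in>fset A (\<eta>0(a:=b)). \<Prod>z\<in>insert a A. h z (\<eta>' z))
        = (\<Sum>\<eta>'\<in>fset A (\<eta>0(a:=b)). h a b * (\<Prod>z\<in>A. h z (\<eta>' z)))"
    proof (rule sum.cong)
      fix \<eta>' assume "\<eta>' \<in> fset A (\<eta>0(a:=b))"
      then have "\<eta>' a = b" using insert.hyps by (auto simp: fset_def)
      then show "(\<Prod>z\<in>insert a A. h z (\<eta>' z)) = h a b * (\<Prod>z\<in>A. h z (\<eta>' z))"
        using insert.hyps by simp
    qed simp
    also have "\<dots> = h a b * (\<Prod>z\<in>A. h z True + h z False)"
      by (simp add: sum_distrib_left[symmetric] insert.IH)
    finally show ?thesis .
  qed
  have "(\<Sum>\<eta>'\<in>fset (insert a A) \<eta>0. \<Prod>z\<in>insert a A. h z (\<eta>' z))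
    = (\<Sum>\<eta>'\<in>fset A (\<eta>0(a:=True)). \<Prod>z\<in>insert a A. h z (\<eta>' z))
    + (\<Sum>\<eta>'\<in>fset A (\<eta>0(a:=False)). \<Prod>z\<in>insert a A. h z (\<eta>' z))"
    using insert.hyps by (simp add: fset_insert sum.union_disjoint fset_finite disj)
  also have "\<dots> = (h a True + h a False) * (\<Prod>z\<in>A. h z True + h z False)"
    by (simp only: eq algebra_simps)
  finally show ?case using insert.hyps by simp
qed

definition ind :: "bool \<Rightarrow> real" where "ind b = (if b then 1 else 0)"

lemma ind_simps[simp]: "ind True = 1" "ind False = 0" "0 \<le> ind b" "ind b \<le> 1"
  by (auto simp: ind_def)

locale bsm =
  fixes V :: "nat set" and E :: "nat \<Rightarrow> nat \<Rightarrow> bool" and p :: real and d :: nat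
  assumes G: "conn_simple_graph V E" and deg: "max_degree V E = d" and d1: "d \<ge> 1"
    and p0: "0 < p" and p1: "p < 1"
begin

lemma finV: "finite V" using G by (simp add: conn_simple_graph_def)
lemma Esym: "E x y \<Longrightarrow> E y x" using G by (simp add: conn_simple_graph_def)
lemma Eirr: "\<not> E x x" using G by (simp add: conn_simple_graph_def)
lemma EV1: "E x y \<Longrightarrow> x \<in> V" using G by (simp add: conn_simple_graph_def)
lemma EV2: "E x y \<Longrightarrow> y \<in> V" using G by (simp add: conn_simple_graph_def)

lemma deg_le: "x \<in> V \<Longrightarrow> card {y\<in>V. E x y} \<le> d"
  using deg finV unfolding max_degree_def by (auto intro: Max_ge)

lemma nbhd_sub: "x \<in> V \<Longrightarrow> nbhd V E x \<subseteq> V"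
  by (auto simp: nbhd_def)

lemma nbhd_fin: "finite (nbhd V E x)"
  using finV by (simp add: nbhd_def)

lemma nbhd_self: "x \<in> nbhd V E x" by (simp add: nbhd_def)

lemma card_nbhd: "card (nbhd V E x) = Suc (card {y\<in>V. E x y})"
  using finV Eirr by (simp add: nbhd_def)

lemma card_nbhd_le: "x \<in> V \<Longrightarrow> card (nbhd V E x) \<le> d + 1"
  using card_nbhd deg_le by simp

lemma configs_img: "configs V = (\<lambda>S z. z \<in> S) ` Pow V"
proof
  show "configs V \<subseteq> (\<lambda>S z. z \<in> S) ` Pow V"
  proof
    fix \<eta> assume h: "\<eta> \<in> configs V"
    have "\<eta> = (\<lambda>z. z \<in> {y. \<eta> y})" by simp
    moreover have "{y. \<eta> y} \<subseteq> V" using h by (auto simp: configs_def)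
    ultimately show "\<eta> \<in> (\<lambda>S z. z \<in> S) ` Pow V" by blast
  qed
qed (auto simp: configs_def)

lemma configs_fin: "finite (configs V)"
  using finV by (simp add: configs_img)

lemma fset_configs: "\<eta> \<in> configs V \<Longrightarrow> x \<in> V \<Longrightarrow> fset (nbhd V E x) \<eta> \<subseteq> configs V"
  using nbhd_sub by (auto simp: fset_def configs_def)

definition w :: "nat \<Rightarrow> (nat \<Rightarrow> bool) \<Rightarrow> real" where
  "w x \<eta>' = (\<Prod>z\<in>nbhd V E x. if \<eta>' z then p else 1 - p)"

definition Ex :: "nat \<Rightarrow> (nat \<Rightarrow> bool) \<Rightarrow> ((nat \<Rightarrow> bool) \<Rightarrow> real) \<Rightarrow> real" where
  "Ex x \<eta> f = (\<Sum>\<eta>'\<in>fset (nbhd V E x) \<eta>. w x \<eta>' * f \<eta>')"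

definition eff :: "(nat \<Rightarrow> bool) \<Rightarrow> nat \<Rightarrow> bool" where
  "eff \<eta> x \<longleftrightarrow> (\<not> \<eta> x \<or> (\<forall>y\<in>V. \<eta> y))"

lemma w_nonneg: "0 \<le> w x \<eta>'"
  using p0 p1 unfolding w_def by (intro prod_nonneg) auto

lemma w_le1: "w x \<eta>' \<le> 1"
  using p0 p1 unfolding w_def by (intro prod_le_1) auto

lemma rate_nonneg: "0 \<le> bs_rate V E p \<eta> \<eta>'"
  unfolding bs_rate_def using w_nonneg[unfolded w_def] by (intro sum_nonneg) auto

lemma rate_sum:
  assumes "\<eta> \<in> configs V"
  shows "(\<Sum>\<eta>'\<in>configs V. bs_rate V E p \<eta> \<eta>' * g \<eta>')
       = (\<Sum>x\<in>V. if eff \<eta> x then Ex x \<eta> g else 0)"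
proof -
  have "(\<Sum>\<eta>'\<in>configs V. bs_rate V E p \<eta> \<eta>' * g \<eta>')
     = (\<Sum>\<eta>'\<in>configs V. \<Sum>x\<in>V. (if eff \<eta> x \<and> (\<forall>z. z \<notin> nbhd V E x \<longrightarrow> \<eta>' z = \<eta> z)
             then w x \<eta>' else 0) * g \<eta>')"
    unfolding bs_rate_def sum_distrib_right eff_def w_def by simp
  also have "\<dots> = (\<Sum>x\<in>V. \<Sum>\<eta>'\<in>configs V. (if eff \<eta> x \<and> (\<forall>z. z \<notin> nbhd V E x \<longrightarrow> \<eta>' z = \<eta> z)
             then w x \<eta>' else 0) * g \<eta>')"
    by (rule sum.swap)
  also have "\<dots> = (\<Sum>x\<in>V. if eff \<eta> x then Ex x \<eta> g else 0)"
  proof (rule sum.cong)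
    fix x assume x: "x \<in> V"
    have "(\<Sum>\<eta>'\<in>configs V. (if eff \<eta> x \<and> (\<forall>z. z \<notin> nbhd V E x \<longrightarrow> \<eta>' z = \<eta> z)
             then w x \<eta>' else 0) * g \<eta>')
        = (\<Sum>\<eta>'\<in>configs V. if eff \<eta> x \<and> \<eta>' \<in> fset (nbhd V E x) \<eta> then w x \<eta>' * g \<eta>' else 0)"
      by (intro sum.cong) (auto simp: fset_def)
    also have "\<dots> = (if eff \<eta> x then (\<Sum>\<eta>'\<in>{\<eta>'\<in>configs V. \<eta>' \<in> fset (nbhd V E x) \<eta>}. w x \<eta>' * g \<eta>') else 0)"
      using configs_fin by (simp add: sum.inter_filter)
    also have "{\<eta>'\<in>configs V. \<eta>' \<in> fset (nbhd V E x) \<eta>} = fset (nbhd V E x) \<eta>"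
      using fset_configs[OF assms x] by blast
    finally show "(\<Sum>\<eta>'\<in>configs V. (if eff \<eta> x \<and> (\<forall>z. z \<notin> nbhd V E x \<longrightarrow> \<eta>' z = \<eta> z)
             then w x \<eta>' else 0) * g \<eta>') = (if eff \<eta> x then Ex x \<eta> g else 0)"
      by (simp add: Ex_def)
  qed simp
  finally show ?thesis .
qed

lemma Ex_ind:
  assumes S: "S \<subseteq> nbhd V E x"
  shows "Ex x \<eta> (\<lambda>\<eta>'. ind (\<forall>y\<in>S. \<not> \<eta>' y)) = (1 - p) ^ card S"
proof -
  define h where "h z b = (if b then p else 1 - p) * (if z \<in> S then ind (\<not> b) else 1)" for z b
  have fS: "finite S" using S nbhd_fin finite_subset by blast
  have ii: "ind (\<forall>y\<in>S. \<not> \<eta>' y) = (\<Prod>z\<in>nbhd V E x. if z \<in> S then ind (\<not> \<eta>' z) else 1)" for \<eta>'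
  proof (cases "\<forall>y\<in>S. \<not> \<eta>' y")
    case True
    then have "(\<Prod>z\<in>nbhd V E x. if z \<in> S then ind (\<not> \<eta>' z) else 1) = 1"
      by (intro prod.neutral) auto
    then show ?thesis using True by simp
  next
    case False
    then obtain y where "y \<in> S" "\<eta>' y" by auto
    then have "(\<Prod>z\<in>nbhd V E x. if z \<in> S then ind (\<not> \<eta>' z) else 1) = 0"
      using S nbhd_fin by (intro prod_zero) (auto intro!: bexI[of _ y])
    then show ?thesis using False by (auto simp: ind_def)
  qed
  have "Ex x \<eta> (\<lambda>\<eta>'. ind (\<forall>y\<in>S. \<not> \<eta>' y)) = (\<Sum>\<eta>'\<in>fset (nbhd V E x) \<eta>. \<Prod>z\<in>nbhd V E x. h z (\<eta>' z))"
    unfolding Ex_def w_def ii h_def by (simp add: prod.distrib)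
  also have "\<dots> = (\<Prod>z\<in>nbhd V E x. h z True + h z False)"
    by (rule sum_prod_fset[OF nbhd_fin])
  also have "\<dots> = (\<Prod>z\<in>nbhd V E x. if z \<in> S then 1 - p else 1)"
    by (intro prod.cong) (auto simp: h_def)
  also have "\<dots> = (1 - p) ^ card S"
    using S nbhd_fin by (simp add: prod.If_cases Int_absorb2 Int_commute)
  finally show ?thesis .
qed

lemma Ex_one: "Ex x \<eta> (\<lambda>_. 1) = 1"
  using Ex_ind[of "{}" x \<eta>] by simp

lemma Ex_single: "y \<in> nbhd V E x \<Longrightarrow> Ex x \<eta> (\<lambda>\<eta>'. ind (\<not> \<eta>' y)) = 1 - p"
  using Ex_ind[of "{y}" x \<eta>] by simp

lemma Ex_pair: "y \<in> nbhd V E x \<Longrightarrow> u \<in> nbhd V E x \<Longrightarrow> y \<noteq> u \<Longrightarrow>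
   Ex x \<eta> (\<lambda>\<eta>'. ind (\<not> \<eta>' y \<and> \<not> \<eta>' u)) = (1 - p)^2"
  using Ex_ind[of "{y,u}" x \<eta>] by (simp add: power2_eq_square)

lemma Ex_add: "Ex x \<eta> (\<lambda>e. f e + g e) = Ex x \<eta> f + Ex x \<eta> g"
  by (simp add: Ex_def sum.distrib algebra_simps)
lemma Ex_diff: "Ex x \<eta> (\<lambda>e. f e - g e) = Ex x \<eta> f - Ex x \<eta> g"
  by (simp add: Ex_def sum_subtractf algebra_simps)
lemma Ex_cmult: "Ex x \<eta> (\<lambda>e. c * f e) = c * Ex x \<eta> f"
  by (simp add: Ex_def sum_distrib_left algebra_simps)
lemma Ex_const: "Ex x \<eta> (\<lambda>e. c) = c"
  using Ex_cmult[of x \<eta> c "\<lambda>_. 1"] Ex_one by simp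
lemma Ex_sum: "finite A \<Longrightarrow> Ex x \<eta> (\<lambda>e. \<Sum>i\<in>A. f i e) = (\<Sum>i\<in>A. Ex x \<eta> (f i))"
  unfolding Ex_def sum_distrib_left by (rule sum.swap)
lemma Ex_mono: "(\<And>e. e \<in> fset (nbhd V E x) \<eta> \<Longrightarrow> f e \<le> g e) \<Longrightarrow> Ex x \<eta> f \<le> Ex x \<eta> g"
  unfolding Ex_def using w_nonneg by (intro sum_mono mult_left_mono) auto

end

lemma sum_ind_card: "finite A \<Longrightarrow> (\<Sum>x\<in>A. ind (P x)) = real (card {x\<in>A. P x})"
  by (simp add: ind_def sum.inter_filter[symmetric])

context bsm begin

definition NN :: "(nat \<Rightarrow> bool) \<Rightarrow> real" where
  "NN \<eta> = (\<Sum>y\<in>V. ind (\<not> \<eta> y))"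
definition PP :: "(nat \<Rightarrow> bool) \<Rightarrow> real" where
  "PP \<eta> = (\<Sum>u\<in>V. \<Sum>v\<in>V. ind (E u v \<and> \<not> \<eta> u \<and> \<not> \<eta> v))"
definition \<alpha> :: real where "\<alpha> = 1 / (8 * real d)"
definition Phi :: "(nat \<Rightarrow> bool) \<Rightarrow> real" where
  "Phi \<eta> = NN \<eta> - \<alpha> * PP \<eta>"

lemma alpha_pos: "\<alpha> > 0" using d1 by (simp add: \<alpha>_def)
lemma alpha_d: "\<alpha> * real d = 1/8" using d1 by (simp add: \<alpha>_def)

lemma NN_card: "NN \<eta> = real (card (zeros V \<eta>))"
  unfolding NN_def zeros_def using finV by (simp add: sum_ind_card)

lemma NN_nonneg: "0 \<le> NN \<eta>" unfolding NN_def by (intro sum_nonneg) simp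

lemma deg_sum: "u \<in> V \<Longrightarrow> (\<Sum>v\<in>V. ind (E u v)) \<le> real d"
  using finV deg_le by (simp add: sum_ind_card)

lemma K_bound:
  "(\<Sum>u\<in>V. \<Sum>v\<in>V. ind (E u v \<and> (Zp u \<or> Zp v))) \<le> 2 * real d * (\<Sum>u\<in>V. ind (Zp u))"
proof -
  have one: "(\<Sum>u\<in>V. \<Sum>v\<in>V. ind (Zp u \<and> E u v)) \<le> real d * (\<Sum>u\<in>V. ind (Zp u))"
  proof -
    have "(\<Sum>u\<in>V. \<Sum>v\<in>V. ind (Zp u \<and> E u v)) = (\<Sum>u\<in>V. ind (Zp u) * (\<Sum>v\<in>V. ind (E u v)))"
      unfolding sum_distrib_left by (intro sum.cong refl) (auto simp: ind_def)
    also have "\<dots> \<le> (\<Sum>u\<in>V. ind (Zp u) * real d)"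
      by (intro sum_mono mult_left_mono deg_sum) auto
    finally show ?thesis by (simp add: sum_distrib_left mult.commute)
  qed
  have two: "(\<Sum>u\<in>V. \<Sum>v\<in>V. ind (Zp v \<and> E u v)) = (\<Sum>u\<in>V. \<Sum>v\<in>V. ind (Zp u \<and> E u v))"
    by (subst sum.swap) (intro sum.cong refl, use Esym in \<open>auto simp: ind_def\<close>)
  have "(\<Sum>u\<in>V. \<Sum>v\<in>V. ind (E u v \<and> (Zp u \<or> Zp v)))
      \<le> (\<Sum>u\<in>V. \<Sum>v\<in>V. ind (Zp u \<and> E u v) + ind (Zp v \<and> E u v))"
    by (intro sum_mono) (auto simp: ind_def)
  also have "\<dots> = (\<Sum>u\<in>V. \<Sum>v\<in>V. ind (Zp u \<and> E u v)) + (\<Sum>u\<in>V. \<Sum>v\<in>V. ind (Zp v \<and> E u v))"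
    by (simp add: sum.distrib)
  finally show ?thesis using one two by linarith
qed

lemma PP_nonneg: "0 \<le> PP \<eta>" unfolding PP_def by (intro sum_nonneg) simp

lemma PP_le: "PP \<eta> \<le> real d * NN \<eta>"
proof -
  have "PP \<eta> = (\<Sum>u\<in>V. ind (\<not> \<eta> u) * (\<Sum>v\<in>V. ind (E u v \<and> \<not> \<eta> v)))"
    unfolding PP_def sum_distrib_left by (intro sum.cong refl) (auto simp: ind_def)
  also have "\<dots> \<le> (\<Sum>u\<in>V. ind (\<not> \<eta> u) * real d)"
  proof (intro sum_mono mult_left_mono)
    fix u assume u: "u \<in> V"
    have "(\<Sum>v\<in>V. ind (E u v \<and> \<not> \<eta> v)) \<le> (\<Sum>v\<in>V. ind (E u v))"
      by (intro sum_mono) (auto simp: ind_def)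
    then show "(\<Sum>v\<in>V. ind (E u v \<and> \<not> \<eta> v)) \<le> real d" using deg_sum[OF u] by linarith
  qed simp
  finally show ?thesis by (simp add: NN_def sum_distrib_left mult.commute)
qed

lemma Phi_ge: "Phi \<eta> \<ge> 7/8 * NN \<eta>"
proof -
  have "\<alpha> * PP \<eta> \<le> \<alpha> * (real d * NN \<eta>)" using PP_le alpha_pos by (intro mult_left_mono) auto
  moreover have "\<alpha> * (real d * NN \<eta>) = NN \<eta> / 8" using alpha_d by (simp add: algebra_simps)
  ultimately show ?thesis unfolding Phi_def by simp
qed

lemma Phi_le: "Phi \<eta> \<le> NN \<eta>"
  unfolding Phi_def using PP_nonneg alpha_pos by simp

lemma NN_diff:
  assumes x: "x \<in> V" and e: "e \<in> fset (nbhd V E x) \<eta>"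
  shows "NN e - NN \<eta> = (\<Sum>y\<in>nbhd V E x. ind (\<not> e y) - ind (\<not> \<eta> y))"
proof -
  have s: "nbhd V E x \<subseteq> V" using nbhd_sub x .
  have "NN f = (\<Sum>y\<in>nbhd V E x. ind (\<not> f y)) + (\<Sum>y\<in>V - nbhd V E x. ind (\<not> f y))" for f
    unfolding NN_def using sum.subset_diff[OF s finV] by (simp add: add.commute)
  moreover have "(\<Sum>y\<in>V - nbhd V E x. ind (\<not> e y)) = (\<Sum>y\<in>V - nbhd V E x. ind (\<not> \<eta> y))"
    using e by (intro sum.cong) (auto simp: fset_def)
  ultimately show ?thesis by (simp add: sum_subtractf)
qed

lemma NN_diff_abs:
  assumes x: "x \<in> V" and e: "e \<in> fset (nbhd V E x) \<eta>"
  shows "\<bar>NN e - NN \<eta>\<bar> \<le> real d + 1"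
proof -
  have "\<bar>NN e - NN \<eta>\<bar> \<le> (\<Sum>y\<in>nbhd V E x. \<bar>ind (\<not> e y) - ind (\<not> \<eta> y)\<bar>)"
    unfolding NN_diff[OF x e] by (rule sum_abs)
  also have "\<dots> \<le> (\<Sum>y\<in>nbhd V E x. 1)" by (intro sum_mono) (auto simp: ind_def)
  also have "\<dots> \<le> real d + 1" using card_nbhd_le[OF x] by simp
  finally show ?thesis .
qed

definition T :: "(nat \<Rightarrow> bool) \<Rightarrow> nat \<Rightarrow> real" where
  "T \<eta> x = (\<Sum>u\<in>V. \<Sum>v\<in>V. ind (E u v \<and> \<not> \<eta> u \<and> \<not> \<eta> v \<and> (u \<in> nbhd V E x \<or> v \<in> nbhd V E x)))"

lemma PP_diff:
  assumes x: "x \<in> V" and e: "e \<in> fset (nbhd V E x) \<eta>"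
  shows "PP e - PP \<eta> \<ge> (\<Sum>v\<in>V. ind (E x v \<and> \<not> e x \<and> \<not> e v)) - T \<eta> x"
proof -
  have "(\<Sum>v\<in>V. ind (E x v \<and> \<not> e x \<and> \<not> e v)) - T \<eta> x
      = (\<Sum>u\<in>V. \<Sum>v\<in>V. (if u = x then ind (E x v \<and> \<not> e x \<and> \<not> e v) else 0)
          - ind (E u v \<and> \<not> \<eta> u \<and> \<not> \<eta> v \<and> (u \<in> nbhd V E x \<or> v \<in> nbhd V E x)))"
  proof -
    have "(\<Sum>u\<in>V. \<Sum>v\<in>V. (if u = x then ind (E x v \<and> \<not> e x \<and> \<not> e v) else 0))
        = (\<Sum>v\<in>V. ind (E x v \<and> \<not> e x \<and> \<not> e v))"
      by (subst sum.swap) (simp add: sum.delta finV x)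
    then show ?thesis unfolding T_def sum_subtractf by simp
  qed
  also have "\<dots> \<le> (\<Sum>u\<in>V. \<Sum>v\<in>V. ind (E u v \<and> \<not> e u \<and> \<not> e v) - ind (E u v \<and> \<not> \<eta> u \<and> \<not> \<eta> v))"
  proof (intro sum_mono)
    fix u v
    show "(if u = x then ind (E x v \<and> \<not> e x \<and> \<not> e v) else 0)
          - ind (E u v \<and> \<not> \<eta> u \<and> \<not> \<eta> v \<and> (u \<in> nbhd V E x \<or> v \<in> nbhd V E x))
        \<le> ind (E u v \<and> \<not> e u \<and> \<not> e v) - ind (E u v \<and> \<not> \<eta> u \<and> \<not> \<eta> v)"
    proof (cases "u \<in> nbhd V E x \<or> v \<in> nbhd V E x")
      case True
      then show ?thesis by (auto simp: ind_def)
    next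
      case False
      then have "e u = \<eta> u" "e v = \<eta> v" "u \<noteq> x" using e nbhd_self[of x] by (auto simp: fset_def)
      then show ?thesis using False by (auto simp: ind_def)
    qed
  qed
  also have "\<dots> = PP e - PP \<eta>" unfolding PP_def by (simp add: sum_subtractf)
  finally show ?thesis .
qed

lemma PP_diff_abs:
  assumes x: "x \<in> V" and e: "e \<in> fset (nbhd V E x) \<eta>"
  shows "\<bar>PP e - PP \<eta>\<bar> \<le> 2 * real d * (real d + 1)"
proof -
  have "\<bar>PP e - PP \<eta>\<bar> = \<bar>\<Sum>u\<in>V. \<Sum>v\<in>V. ind (E u v \<and> \<not> e u \<and> \<not> e v) - ind (E u v \<and> \<not> \<eta> u \<and> \<not> \<eta> v)\<bar>"
    unfolding PP_def by (simp add: sum_subtractf)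
  also have "\<dots> \<le> (\<Sum>u\<in>V. \<bar>\<Sum>v\<in>V. ind (E u v \<and> \<not> e u \<and> \<not> e v) - ind (E u v \<and> \<not> \<eta> u \<and> \<not> \<eta> v)\<bar>)"
    by (rule sum_abs)
  also have "\<dots> \<le> (\<Sum>u\<in>V. \<Sum>v\<in>V. \<bar>ind (E u v \<and> \<not> e u \<and> \<not> e v) - ind (E u v \<and> \<not> \<eta> u \<and> \<not> \<eta> v)\<bar>)"
    by (intro sum_mono sum_abs)
  also have "\<dots> \<le> (\<Sum>u\<in>V. \<Sum>v\<in>V. ind (E u v \<and> (u \<in> nbhd V E x \<or> v \<in> nbhd V E x)))"
  proof (intro sum_mono)
    fix u v
    show "\<bar>ind (E u v \<and> \<not> e u \<and> \<not> e v) - ind (E u v \<and> \<not> \<eta> u \<and> \<not> \<eta> v)\<bar>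
        \<le> ind (E u v \<and> (u \<in> nbhd V E x \<or> v \<in> nbhd V E x))"
    proof (cases "u \<in> nbhd V E x \<or> v \<in> nbhd V E x")
      case True
      then show ?thesis by (auto simp: ind_def)
    next
      case False
      then have "e u = \<eta> u" "e v = \<eta> v" using e by (auto simp: fset_def)
      then show ?thesis by (auto simp: ind_def)
    qed
  qed
  also have "\<dots> \<le> 2 * real d * (\<Sum>u\<in>V. ind (u \<in> nbhd V E x))" by (rule K_bound)
  also have "(\<Sum>u\<in>V. ind (u \<in> nbhd V E x)) \<le> real d + 1"
  proof -
    have "(\<Sum>u\<in>V. ind (u \<in> nbhd V E x)) = real (card {u\<in>V. u \<in> nbhd V E x})"
      using finV by (simp add: sum_ind_card)
    also have "{u\<in>V. u \<in> nbhd V E x} = nbhd V E x" using nbhd_sub[OF x] by blast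
    finally show ?thesis using card_nbhd_le[OF x] by simp
  qed
  then have "2 * real d * (\<Sum>u\<in>V. ind (u \<in> nbhd V E x)) \<le> 2 * real d * (real d + 1)"
    by (intro mult_left_mono) auto
  finally show ?thesis .
qed

lemma Phi_diff_abs:
  assumes x: "x \<in> V" and e: "e \<in> fset (nbhd V E x) \<eta>"
  shows "\<bar>Phi e - Phi \<eta>\<bar> \<le> 2 * (real d + 1)"
proof -
  have "\<bar>Phi e - Phi \<eta>\<bar> = \<bar>(NN e - NN \<eta>) - \<alpha> * (PP e - PP \<eta>)\<bar>"
    unfolding Phi_def by (simp add: algebra_simps)
  also have "\<dots> \<le> \<bar>NN e - NN \<eta>\<bar> + \<alpha> * \<bar>PP e - PP \<eta>\<bar>"
  proof -
    have "\<bar>(NN e - NN \<eta>) - \<alpha> * (PP e - PP \<eta>)\<bar> \<le> \<bar>NN e - NN \<eta>\<bar> + \<bar>\<alpha> * (PP e - PP \<eta>)\<bar>"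
      by (rule abs_triangle_ineq4)
    then show ?thesis using alpha_pos by (simp add: abs_mult)
  qed
  finally have 1: "\<bar>Phi e - Phi \<eta>\<bar> \<le> \<bar>NN e - NN \<eta>\<bar> + \<alpha> * \<bar>PP e - PP \<eta>\<bar>" .
  have "\<alpha> * \<bar>PP e - PP \<eta>\<bar> \<le> \<alpha> * (2 * real d * (real d + 1))"
    using PP_diff_abs[OF x e] alpha_pos by (intro mult_left_mono) auto
  also have "\<alpha> * (2 * real d * (real d + 1)) = (real d + 1) / 4"
    using alpha_d by (simp add: algebra_simps)
  finally have 2: "\<alpha> * \<bar>PP e - PP \<eta>\<bar> \<le> (real d + 1) / 4" .
  have "real d \<ge> 0" by simp
  then show ?thesis using 1 2 NN_diff_abs[OF x e] by argo
qed

end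

lemma arith1:
  fixes D q :: real
  assumes D: "D \<ge> 2" and q: "0 < q" and qq: "q \<le> 1/D + 1/(32*D^3)"
  shows "q * D - 1 - q^2/8 \<le> - 1/(32*D^2)"
proof -
  define s where "s = q * D"
  have Dp: "D > 0" using D by simp
  have s_le: "s \<le> 1 + 1/(32*D^2)"
  proof -
    have "s \<le> (1/D + 1/(32*D^3)) * D" unfolding s_def using qq Dp by (intro mult_right_mono) auto
    also have "\<dots> = 1 + 1/(32*D^2)" using Dp by (simp add: field_simps power3_eq_cube power2_eq_square)
    finally show ?thesis .
  qed
  have qs: "q^2 = s^2 / D^2" unfolding s_def using Dp by (simp add: field_simps)
  show ?thesis
  proof (cases "s \<le> 1 - 1/(32*D^2)")
    case True
    have "q^2/8 \<ge> 0" by simp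
    then show ?thesis using True unfolding s_def by linarith
  next
    case False
    have "2 * 2 \<le> D * D" using D by (intro mult_mono) auto
    then have D2: "D^2 \<ge> 4" by (simp add: power2_eq_square)
    have "1/(32*D^2) \<le> 1/(32*4)" using D2 by (intro divide_left_mono) auto
    then have "s \<ge> 3/4" using False by linarith
    then have "3/4 * (3/4) \<le> s * s" by (intro mult_mono) auto
    then have "s^2 \<ge> 1/2" by (simp add: power2_eq_square)
    then have "q^2 / 8 \<ge> 1/(16 * D^2)" unfolding qs using Dp by (simp add: field_simps)
    moreover have "1/(16*D^2) = 2 * (1/(32*D^2))" by simp
    moreover have "q * D - 1 \<le> 1/(32*D^2)" using s_le unfolding s_def by simp
    ultimately show ?thesis by linarith
  qed
qed

definition q0f :: "nat \<Rightarrow> real" where "q0f d = 1/(real d + 1) + 1/(32 * (real d + 1)^3)"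
definition epsf :: "nat \<Rightarrow> real" where "epsf d = 1/(32 * (real d + 1)^2)"

context bsm begin

abbreviation "q0 \<equiv> q0f d"
abbreviation "eps \<equiv> epsf d"

lemma Ex_cong: "(\<And>e. e \<in> fset (nbhd V E x) \<eta> \<Longrightarrow> f e = g e) \<Longrightarrow> Ex x \<eta> f = Ex x \<eta> g"
  unfolding Ex_def by (intro sum.cong) auto

lemma drift_raw:
  assumes x: "x \<in> V"
  shows "Ex x \<eta> (\<lambda>e. Phi e - Phi \<eta>) \<le>
     (1-p) * (1 + real (card {y\<in>V. E x y})) - (\<Sum>y\<in>nbhd V E x. ind (\<not> \<eta> y))
     - \<alpha> * (1-p)^2 * real (card {y\<in>V. E x y}) + \<alpha> * T \<eta> x"
proof -
  let ?N = "nbhd V E x"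
  have split: "Ex x \<eta> (\<lambda>e. Phi e - Phi \<eta>) = Ex x \<eta> (\<lambda>e. NN e - NN \<eta>) - \<alpha> * Ex x \<eta> (\<lambda>e. PP e - PP \<eta>)"
  proof -
    have "Ex x \<eta> (\<lambda>e. Phi e - Phi \<eta>) = Ex x \<eta> (\<lambda>e. (NN e - NN \<eta>) - \<alpha> * (PP e - PP \<eta>))"
      unfolding Phi_def by (simp add: algebra_simps)
    also have "\<dots> = Ex x \<eta> (\<lambda>e. NN e - NN \<eta>) - \<alpha> * Ex x \<eta> (\<lambda>e. PP e - PP \<eta>)"
      by (simp add: Ex_diff Ex_cmult)
    finally show ?thesis .
  qed
  have nn: "Ex x \<eta> (\<lambda>e. NN e - NN \<eta>) = (1-p) * (1 + real (card {y\<in>V. E x y})) - (\<Sum>y\<in>?N. ind (\<not> \<eta> y))"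
  proof -
    have "Ex x \<eta> (\<lambda>e. NN e - NN \<eta>) = Ex x \<eta> (\<lambda>e. \<Sum>y\<in>?N. ind (\<not> e y) - ind (\<not> \<eta> y))"
      by (rule Ex_cong) (rule NN_diff[OF x])
    also have "\<dots> = (\<Sum>y\<in>?N. Ex x \<eta> (\<lambda>e. ind (\<not> e y) - ind (\<not> \<eta> y)))"
      by (rule Ex_sum[OF nbhd_fin])
    also have "\<dots> = (\<Sum>y\<in>?N. (1 - p) - ind (\<not> \<eta> y))"
      by (intro sum.cong refl) (simp add: Ex_diff Ex_const Ex_single)
    also have "\<dots> = (1-p) * real (card ?N) - (\<Sum>y\<in>?N. ind (\<not> \<eta> y))"
      by (simp add: sum_subtractf)
    finally show ?thesis by (simp add: card_nbhd)
  qed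
  have pp: "Ex x \<eta> (\<lambda>e. PP e - PP \<eta>) \<ge> (1-p)^2 * real (card {y\<in>V. E x y}) - T \<eta> x"
  proof -
    have "Ex x \<eta> (\<lambda>e. (\<Sum>v\<in>V. ind (E x v \<and> \<not> e x \<and> \<not> e v)) - T \<eta> x) \<le> Ex x \<eta> (\<lambda>e. PP e - PP \<eta>)"
      by (rule Ex_mono) (rule PP_diff[OF x])
    moreover have "Ex x \<eta> (\<lambda>e. (\<Sum>v\<in>V. ind (E x v \<and> \<not> e x \<and> \<not> e v)) - T \<eta> x)
        = (\<Sum>v\<in>V. Ex x \<eta> (\<lambda>e. ind (E x v \<and> \<not> e x \<and> \<not> e v))) - T \<eta> x"
      by (simp add: Ex_diff Ex_const Ex_sum finV)
    moreover have "(\<Sum>v\<in>V. Ex x \<eta> (\<lambda>e. ind (E x v \<and> \<not> e x \<and> \<not> e v))) = (\<Sum>v\<in>V. (1-p)^2 * ind (E x v))"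
    proof (intro sum.cong refl)
      fix v assume v: "v \<in> V"
      show "Ex x \<eta> (\<lambda>e. ind (E x v \<and> \<not> e x \<and> \<not> e v)) = (1-p)^2 * ind (E x v)"
      proof (cases "E x v")
        case True
        then have "v \<in> nbhd V E x" "v \<noteq> x" using v Eirr by (auto simp: nbhd_def)
        then show ?thesis using True Ex_pair[OF nbhd_self, of v x \<eta>] by simp
      next
        case False
        then show ?thesis using Ex_const[of x \<eta> 0] by simp
      qed
    qed
    moreover have "(\<Sum>v\<in>V. (1-p)^2 * ind (E x v)) = (1-p)^2 * real (card {y\<in>V. E x y})"
      by (simp add: sum_distrib_left[symmetric] sum_ind_card finV)
    ultimately show ?thesis by linarith
  qed
  have "\<alpha> * ((1-p)^2 * real (card {y\<in>V. E x y}) - T \<eta> x) \<le> \<alpha> * Ex x \<eta> (\<lambda>e. PP e - PP \<eta>)"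
    using pp alpha_pos by (intro mult_left_mono) auto
  then show ?thesis unfolding split nn by (simp add: algebra_simps)
qed

lemma T_zero:
  assumes x: "x \<in> V" and ones: "\<forall>y\<in>nbhd V E x. y \<noteq> x \<longrightarrow> \<eta> y"
  shows "T \<eta> x = 0"
  unfolding T_def
proof (intro sum.neutral ballI)
  fix u v assume "u \<in> V" "v \<in> V"
  have "\<not> (E u v \<and> \<not> \<eta> u \<and> \<not> \<eta> v \<and> (u \<in> nbhd V E x \<or> v \<in> nbhd V E x))"
  proof
    assume h: "E u v \<and> \<not> \<eta> u \<and> \<not> \<eta> v \<and> (u \<in> nbhd V E x \<or> v \<in> nbhd V E x)"
    show False
    proof (cases "u \<in> nbhd V E x")
      case True
      then have "u = x" using ones h by blast
      then have "v \<in> nbhd V E x" using h EV2 by (auto simp: nbhd_def)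
      then have "v = x" using ones h by blast
      then show False using h \<open>u = x\<close> Eirr by blast
    next
      case False
      then have vN: "v \<in> nbhd V E x" using h by blast
      then have "v = x" using ones h by blast
      then have "u \<in> nbhd V E x" using h EV1 Esym by (auto simp: nbhd_def)
      then show False using False by blast
    qed
  qed
  then show "ind (E u v \<and> \<not> \<eta> u \<and> \<not> \<eta> v \<and> (u \<in> nbhd V E x \<or> v \<in> nbhd V E x)) = 0"
    by (simp add: ind_def)
qed

lemma T_le:
  assumes x: "x \<in> V"
  shows "T \<eta> x \<le> 2 * real d * (\<Sum>y\<in>nbhd V E x. ind (\<not> \<eta> y))"
proof -
  have "T \<eta> x \<le> (\<Sum>u\<in>V. \<Sum>v\<in>V. ind (E u v \<and> ((u \<in> nbhd V E x \<and> \<not> \<eta> u) \<or> (v \<in> nbhd V E x \<and> \<not> \<eta> v))))"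
    unfolding T_def by (intro sum_mono) (auto simp: ind_def)
  also have "\<dots> \<le> 2 * real d * (\<Sum>u\<in>V. ind (u \<in> nbhd V E x \<and> \<not> \<eta> u))" by (rule K_bound)
  also have "(\<Sum>u\<in>V. ind (u \<in> nbhd V E x \<and> \<not> \<eta> u)) = (\<Sum>y\<in>nbhd V E x. ind (\<not> \<eta> y))"
  proof -
    have "(\<Sum>u\<in>V. ind (u \<in> nbhd V E x \<and> \<not> \<eta> u)) = (\<Sum>u\<in>V. if u \<in> nbhd V E x then ind (\<not> \<eta> u) else 0)"
      by (intro sum.cong) (auto simp: ind_def)
    also have "\<dots> = (\<Sum>y\<in>V \<inter> nbhd V E x. ind (\<not> \<eta> y))"
      using finV by (simp add: sum.inter_restrict)
    also have "V \<inter> nbhd V E x = nbhd V E x" using nbhd_sub[OF x] by blast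
    finally show ?thesis .
  qed
  finally show ?thesis .
qed


lemma drift:
  assumes x: "x \<in> V" and zx: "\<not> \<eta> x" and qq: "1 - p \<le> q0"
  shows "Ex x \<eta> (\<lambda>e. Phi e - Phi \<eta>) \<le> - eps"
proof -
  let ?N = "nbhd V E x"
  let ?g = "real (card {y\<in>V. E x y})"
  let ?zB = "\<Sum>y\<in>?N. ind (\<not> \<eta> y)"
  let ?q = "1 - p"
  define D where "D = real d + 1"
  have D2: "D \<ge> 2" using d1 unfolding D_def by simp
  have qpos: "?q > 0" using p1 by simp
  have qle1: "?q \<le> 1" using p0 by simp
  have g_le: "?g \<le> real d" using deg_le[OF x] by simp
  have qD: "?q * D \<le> 1 + 1/(32*D^2)"
  proof -
    have "?q * D \<le> q0 * D" using qq D2 by (intro mult_right_mono) auto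
    also have "\<dots> = 1 + 1/(32*D^2)" unfolding q0f_def D_def[symmetric] using D2
      by (simp add: field_simps power3_eq_cube power2_eq_square)
    finally show ?thesis .
  qed
  have "2 * 2 \<le> D * D" using D2 by (intro mult_mono) auto
  then have D2sq: "D^2 \<ge> 4" by (simp add: power2_eq_square)
  have dr: "Ex x \<eta> (\<lambda>e. Phi e - Phi \<eta>) \<le> ?q * (1 + ?g) - ?zB - \<alpha> * ?q^2 * ?g + \<alpha> * T \<eta> x"
    by (rule drift_raw[OF x])
  have zx1: "ind (\<not> \<eta> x) = 1" using zx by simp
  show ?thesis
  proof (cases "\<forall>y\<in>?N. y \<noteq> x \<longrightarrow> \<eta> y")
    case True
    have T0: "T \<eta> x = 0" by (rule T_zero[OF x True])
    have zB1: "?zB = 1"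
    proof -
      have "?zB = ind (\<not> \<eta> x) + (\<Sum>y\<in>?N - {x}. ind (\<not> \<eta> y))"
        by (rule sum.remove[OF nbhd_fin nbhd_self])
      also have "(\<Sum>y\<in>?N - {x}. ind (\<not> \<eta> y)) = 0" using True by (intro sum.neutral) auto
      finally show ?thesis using zx by simp
    qed
    have aq: "\<alpha> * ?q^2 \<le> ?q"
    proof -
      have "\<alpha> \<le> 1" using d1 by (simp add: \<alpha>_def)
      then have "\<alpha> * ?q^2 \<le> 1 * ?q^2" using alpha_pos by (intro mult_right_mono) auto
      also have "?q^2 \<le> ?q" using qpos qle1 by (simp add: power2_eq_square mult_le_cancel_right1)
      finally show ?thesis by simp
    qed
    have "?q * (1 + ?g) - ?zB - \<alpha> * ?q^2 * ?g + \<alpha> * T \<eta> x = ?q - 1 + ?g * (?q - \<alpha> * ?q^2)"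
      using T0 zB1 by (simp add: algebra_simps)
    also have "\<dots> \<le> ?q - 1 + real d * (?q - \<alpha> * ?q^2)"
      using g_le aq by (intro add_left_mono mult_right_mono) auto
    also have "\<dots> = ?q * D - 1 - ?q^2 / 8"
      unfolding D_def using alpha_d by (simp add: algebra_simps)
    also have "\<dots> \<le> - 1/(32*D^2)"
      by (rule arith1[OF D2 qpos]) (use qq in \<open>simp add: q0f_def D_def\<close>)
    finally show ?thesis using dr unfolding epsf_def D_def by simp
  next
    case False
    then obtain y where y: "y \<in> ?N" "y \<noteq> x" "\<not> \<eta> y" by blast
    have zB2: "?zB \<ge> 2"
    proof -
      have "(\<Sum>y\<in>{x,y}. ind (\<not> \<eta> y)) \<le> ?zB"
        using y nbhd_self nbhd_fin by (intro sum_mono2) auto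
      then show ?thesis using y zx by simp
    qed
    have Tb: "\<alpha> * T \<eta> x \<le> ?zB / 4"
    proof -
      have "\<alpha> * T \<eta> x \<le> \<alpha> * (2 * real d * ?zB)" using T_le[OF x] alpha_pos by (intro mult_left_mono) auto
      also have "\<dots> = ?zB / 4" using alpha_d by (simp add: algebra_simps)
      finally show ?thesis .
    qed
    have nn: "\<alpha> * ?q^2 * ?g \<ge> 0" using alpha_pos by simp
    have "?q * (1 + ?g) \<le> ?q * D" unfolding D_def using g_le qpos by (intro mult_left_mono) auto
    then have "Ex x \<eta> (\<lambda>e. Phi e - Phi \<eta>) \<le> ?q * D - 3/4 * ?zB" using dr Tb nn by linarith
    also have "\<dots> \<le> 1 + 1/(32*D^2) - 3/2" using qD zB2 by linarith
    also have "\<dots> \<le> - 1/(32*D^2)"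
    proof -
      have "1/(32*D^2) \<le> 1/(32*4)" using D2sq by (intro divide_left_mono) auto
      then show ?thesis by linarith
    qed
    finally show ?thesis unfolding epsf_def D_def by simp
  qed
qed

end

lemma exp_quad: fixes t :: real assumes "\<bar>t\<bar> \<le> 1" shows "exp t \<le> 1 + t + t^2"
proof (cases "t \<ge> 0")
  case True then show ?thesis using exp_bound[of t] assms by simp
next
  case False
  then have t: "t < 0" by simp
  have "1 - t \<le> exp (- t)" using exp_ge_add_one_self[of "-t"] by simp
  then have "exp t \<le> 1 / (1 - t)" using t by (simp add: exp_minus field_simps)
  also have "1 / (1 - t) \<le> 1 + t + t^2"
  proof -
    have "1 \<le> (1 - t) * (1 + t + t^2)"
    proof -
      have "(1 - t) * (1 + t + t^2) = 1 - t^3" by (simp add: algebra_simps power2_eq_square power3_eq_cube)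
      moreover have "t^3 \<le> 0"
      proof -
        have "t * t > 0" using t by (simp add: mult_neg_neg)
        then have "t * t * t < 0" using t by (simp add: mult_pos_neg)
        then show ?thesis by (simp add: power3_eq_cube)
      qed
      ultimately show ?thesis by simp
    qed
    then show ?thesis using t by (simp add: field_simps)
  qed
  finally show ?thesis .
qed

lemma sq2: fixes a b :: real shows "(a * (2 * b))^2 = a^2 * (4 * b^2)"
  by (simp add: power2_eq_square)

definition thetaf :: "nat \<Rightarrow> real" where "thetaf d = epsf d / (8 * (real d + 1)^2)"

context bsm begin

abbreviation "\<theta> \<equiv> thetaf d"
definition f :: "(nat \<Rightarrow> bool) \<Rightarrow> real" where "f e = exp (\<theta> * Phi e)"

lemma eps_pos: "eps > 0" by (simp add: epsf_def)
lemma theta_pos: "\<theta> > 0" using eps_pos by (simp add: thetaf_def)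

lemma theta_small: "\<theta> * (2 * (real d + 1)) \<le> 1" "\<theta> * (4 * (real d + 1)^2) = eps / 2"
proof -
  define D where "D = real d + 1"
  have D1: "D \<ge> 1" unfolding D_def by simp
  have "\<theta> * (2 * D) = 1 / (128 * D^3)"
    unfolding thetaf_def epsf_def D_def[symmetric] using D1 by (simp add: power2_eq_square power3_eq_cube)
  also have "\<dots> \<le> 1"
  proof -
    have "1 \<le> D^3" using D1 by (simp add: one_le_power)
    then have h: "1 \<le> 128 * D^3" by linarith
    have "1 / (128 * D^3) \<le> 1 / 1" by (rule divide_left_mono) (use h D1 in auto)
    then show ?thesis by simp
  qed
  finally show "\<theta> * (2 * (real d + 1)) \<le> 1" unfolding D_def .
  show "\<theta> * (4 * (real d + 1)^2) = eps / 2"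
    unfolding thetaf_def by (simp add: field_simps)
qed

lemma Lf_neg:
  assumes \<eta>: "\<eta> \<in> configs V" and z: "\<exists>y\<in>V. \<not> \<eta> y" and qq: "1 - p \<le> q0"
  shows "(\<Sum>e\<in>configs V. bs_rate V E p \<eta> e * (f e - f \<eta>)) \<le> - (\<theta> * eps / 2) * f \<eta>"
proof -
  let ?c = "- (\<theta> * eps / 2) * f \<eta>"
  have loc: "Ex x \<eta> (\<lambda>e. f e - f \<eta>) \<le> ?c" if x: "x \<in> V" and zx: "\<not> \<eta> x" for x
  proof -
    have fe: "f e - f \<eta> = f \<eta> * (exp (\<theta> * (Phi e - Phi \<eta>)) - 1)" for e
    proof -
      have "exp (\<theta> * Phi e) = exp (\<theta> * Phi \<eta> + \<theta> * (Phi e - Phi \<eta>))"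
        by (simp add: right_diff_distrib)
      also have "\<dots> = exp (\<theta> * Phi \<eta>) * exp (\<theta> * (Phi e - Phi \<eta>))" by (rule exp_add)
      finally show ?thesis unfolding f_def by (simp add: right_diff_distrib)
    qed
    have step1: "Ex x \<eta> (\<lambda>e. f e - f \<eta>) = f \<eta> * Ex x \<eta> (\<lambda>e. exp (\<theta> * (Phi e - Phi \<eta>)) - 1)"
      unfolding fe by (rule Ex_cmult)
    have "Ex x \<eta> (\<lambda>e. exp (\<theta> * (Phi e - Phi \<eta>)) - 1)
        \<le> Ex x \<eta> (\<lambda>e. \<theta> * (Phi e - Phi \<eta>) + \<theta>^2 * (4 * (real d + 1)^2))"
    proof (rule Ex_mono)
      fix e assume e: "e \<in> fset (nbhd V E x) \<eta>"
      have a: "\<bar>Phi e - Phi \<eta>\<bar> \<le> 2 * (real d + 1)" by (rule Phi_diff_abs[OF x e])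
      have b: "\<bar>\<theta> * (Phi e - Phi \<eta>)\<bar> \<le> \<theta> * (2 * (real d + 1))"
        using a theta_pos by (simp add: abs_mult)
      then have "\<bar>\<theta> * (Phi e - Phi \<eta>)\<bar> \<le> 1" using theta_small(1) by linarith
      then have "exp (\<theta> * (Phi e - Phi \<eta>)) \<le> 1 + \<theta> * (Phi e - Phi \<eta>) + (\<theta> * (Phi e - Phi \<eta>))^2"
        by (rule exp_quad)
      moreover have "(\<theta> * (Phi e - Phi \<eta>))^2 \<le> (\<theta> * (2 * (real d + 1)))^2"
        using power_mono[OF b abs_ge_zero, of 2] by (simp only: power2_abs)
      moreover have "(\<theta> * (2 * (real d + 1)))^2 = \<theta>^2 * (4 * (real d + 1)^2)"
        using sq2[of \<theta> "real d + 1"] .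
      ultimately show "exp (\<theta> * (Phi e - Phi \<eta>)) - 1 \<le> \<theta> * (Phi e - Phi \<eta>) + \<theta>^2 * (4 * (real d + 1)^2)"
        by linarith
    qed
    also have "Ex x \<eta> (\<lambda>e. \<theta> * (Phi e - Phi \<eta>) + \<theta>^2 * (4 * (real d + 1)^2))
        = \<theta> * Ex x \<eta> (\<lambda>e. Phi e - Phi \<eta>) + \<theta>^2 * (4 * (real d + 1)^2)"
      by (simp only: Ex_add Ex_cmult Ex_const)
    also have "\<dots> \<le> \<theta> * (- eps) + \<theta>^2 * (4 * (real d + 1)^2)"
      using drift[of x \<eta>, OF x zx qq] theta_pos by (intro add_right_mono mult_left_mono) auto
    also have "\<theta>^2 * (4 * (real d + 1)^2) = \<theta> * (\<theta> * (4 * (real d + 1)^2))"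
      by (simp add: power2_eq_square)
    also have "\<dots> = \<theta> * (eps / 2)" by (simp only: theta_small(2))
    finally have "Ex x \<eta> (\<lambda>e. exp (\<theta> * (Phi e - Phi \<eta>)) - 1) \<le> - (\<theta> * eps / 2)"
      by (simp add: mult.commute)
    then have "f \<eta> * Ex x \<eta> (\<lambda>e. exp (\<theta> * (Phi e - Phi \<eta>)) - 1) \<le> f \<eta> * (- (\<theta> * eps / 2))"
      by (intro mult_left_mono) (auto simp: f_def)
    then show ?thesis unfolding step1 by (simp add: algebra_simps)
  qed
  have effz: "eff \<eta> x \<longleftrightarrow> \<not> \<eta> x" for x using z by (auto simp: eff_def)
  have "(\<Sum>e\<in>configs V. bs_rate V E p \<eta> e * (f e - f \<eta>)) = (\<Sum>x\<in>V. if \<not> \<eta> x then Ex x \<eta> (\<lambda>e. f e - f \<eta>) else 0)"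
    using rate_sum[OF \<eta>] effz by simp
  also have "\<dots> \<le> (\<Sum>x\<in>V. ?c * ind (\<not> \<eta> x))"
    using loc by (intro sum_mono) auto
  also have "\<dots> = ?c * NN \<eta>" by (simp add: NN_def sum_distrib_left)
  also have "\<dots> \<le> ?c"
  proof -
    obtain y where y: "y \<in> V" "\<not> \<eta> y" using z by blast
    have "ind (\<not> \<eta> y) \<le> NN \<eta>" unfolding NN_def using y finV
      by (intro member_le_sum) auto
    then have "NN \<eta> \<ge> 1" using y by simp
    moreover have "?c \<le> 0" using theta_pos eps_pos by (simp add: f_def)
    ultimately have "?c * NN \<eta> \<le> ?c * 1" by (intro mult_left_mono_neg) auto
    then show ?thesis by simp
  qed
  finally show ?thesis .
qed

end

definition c1f :: "nat \<Rightarrow> real" where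
  "c1f d = 2 * (real d + 1) * (exp (thetaf d * (real d + 1)) - 1) / (thetaf d * epsf d)"
definition c2f :: "nat \<Rightarrow> real" where "c2f d = 7/8 * thetaf d"

context bsm begin

definition one :: "nat \<Rightarrow> bool" where "one y = (y \<in> V)"

lemma one_configs: "one \<in> configs V" by (simp add: one_def configs_def)
lemma NN_one: "NN one = 0" by (simp add: NN_def one_def)
lemma PP_one: "PP one = 0" by (simp add: PP_def one_def)
lemma f_one: "f one = 1" by (simp add: f_def Phi_def NN_one PP_one)

lemma ne_one_zero: "\<eta> \<in> configs V \<Longrightarrow> \<eta> \<noteq> one \<Longrightarrow> \<exists>y\<in>V. \<not> \<eta> y"
  by (auto simp: configs_def one_def fun_eq_iff)

lemma rate_pos_agree:
  assumes "bs_rate V E p \<eta> e \<noteq> 0"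
  shows "\<exists>x\<in>V. \<forall>z. z \<notin> nbhd V E x \<longrightarrow> e z = \<eta> z"
proof (rule ccontr)
  assume "\<not> ?thesis"
  then have "bs_rate V E p \<eta> e = 0" unfolding bs_rate_def by (intro sum.neutral) auto
  then show False using assms by simp
qed

lemma NN_le_nbhd:
  assumes x: "x \<in> V" and ag: "\<forall>z. z \<notin> nbhd V E x \<longrightarrow> e z = one z"
  shows "NN e \<le> real d + 1"
proof -
  have "NN e \<le> (\<Sum>y\<in>V. ind (y \<in> nbhd V E x))"
    unfolding NN_def using ag by (intro sum_mono) (auto simp: ind_def one_def)
  also have "\<dots> = real (card {y\<in>V. y \<in> nbhd V E x})" using finV by (simp add: sum_ind_card)
  also have "{y\<in>V. y \<in> nbhd V E x} = nbhd V E x" using nbhd_sub[OF x] by blast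
  finally show ?thesis using card_nbhd_le[OF x] by simp
qed

lemma Lf_one:
  "(\<Sum>e\<in>configs V. bs_rate V E p one e * (f e - f one))
     \<le> (exp (\<theta> * (real d + 1)) - 1) * (\<Sum>e\<in>configs V - {one}. bs_rate V E p one e)"
proof -
  have "(\<Sum>e\<in>configs V. bs_rate V E p one e * (f e - f one))
      = bs_rate V E p one one * (f one - f one) + (\<Sum>e\<in>configs V - {one}. bs_rate V E p one e * (f e - f one))"
    by (rule sum.remove[OF configs_fin one_configs])
  also have "\<dots> = (\<Sum>e\<in>configs V - {one}. bs_rate V E p one e * (f e - 1))" by (simp add: f_one)
  also have "\<dots> \<le> (\<Sum>e\<in>configs V - {one}. bs_rate V E p one e * (exp (\<theta> * (real d + 1)) - 1))"
  proof (intro sum_mono)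
    fix e assume "e \<in> configs V - {one}"
    show "bs_rate V E p one e * (f e - 1) \<le> bs_rate V E p one e * (exp (\<theta> * (real d + 1)) - 1)"
    proof (cases "bs_rate V E p one e = 0")
      case True then show ?thesis by simp
    next
      case False
      then obtain x where x: "x \<in> V" and ag: "\<forall>z. z \<notin> nbhd V E x \<longrightarrow> e z = one z"
        using rate_pos_agree by blast
      have "Phi e \<le> real d + 1" using Phi_le NN_le_nbhd[OF x ag] by (rule order_trans)
      then have "\<theta> * Phi e \<le> \<theta> * (real d + 1)" using theta_pos by (intro mult_left_mono) auto
      then have "f e \<le> exp (\<theta> * (real d + 1))" unfolding f_def by simp
      then show ?thesis using rate_nonneg by (intro mult_left_mono) auto
    qed
  qed
  also have "\<dots> = (exp (\<theta> * (real d + 1)) - 1) * (\<Sum>e\<in>configs V - {one}. bs_rate V E p one e)"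
    by (metis mult.commute sum_distrib_right)
  finally show ?thesis .
qed

lemma rate_to_one:
  assumes \<eta>: "\<eta> \<in> configs V" and ne: "\<eta> \<noteq> one"
  shows "bs_rate V E p \<eta> one \<le> real d + 1"
proof -
  obtain y0 where y0: "y0 \<in> V" "\<not> \<eta> y0" using ne_one_zero[OF \<eta> ne] by blast
  have "bs_rate V E p \<eta> one \<le> (\<Sum>x\<in>V. ind (x \<in> nbhd V E y0))"
    unfolding bs_rate_def
  proof (intro sum_mono)
    fix x assume x: "x \<in> V"
    show "(if (\<not> \<eta> x \<or> (\<forall>y\<in>V. \<eta> y)) \<and> (\<forall>z. z \<notin> nbhd V E x \<longrightarrow> one z = \<eta> z)
             then (\<Prod>z\<in>nbhd V E x. if one z then p else 1 - p) else 0) \<le> ind (x \<in> nbhd V E y0)"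
    proof (cases "(\<not> \<eta> x \<or> (\<forall>y\<in>V. \<eta> y)) \<and> (\<forall>z. z \<notin> nbhd V E x \<longrightarrow> one z = \<eta> z)")
      case True
      then have "y0 \<in> nbhd V E x" using y0 by (auto simp: one_def)
      then have "x \<in> nbhd V E y0" using x y0 by (auto simp: nbhd_def dest: Esym)
      then show ?thesis using True w_le1[unfolded w_def] by simp
    next
      case False then show ?thesis by (subst if_not_P) auto
    qed
  qed
  also have "\<dots> = real (card {x\<in>V. x \<in> nbhd V E y0})" using finV by (simp add: sum_ind_card)
  also have "{x\<in>V. x \<in> nbhd V E y0} = nbhd V E y0" using nbhd_sub[OF y0(1)] by blast
  finally show ?thesis using card_nbhd_le[OF y0(1)] by simp
qed

lemma stat_identity:
  assumes st: "bs_stationary V E p \<pi>"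
  shows "(\<Sum>\<eta>\<in>configs V. \<pi> \<eta> * (\<Sum>e\<in>configs V. bs_rate V E p \<eta> e * (g e - g \<eta>))) = 0"
proof -
  let ?C = "configs V"
  let ?r = "bs_rate V E p"
  have bal: "\<And>e. e \<in> ?C \<Longrightarrow> (\<Sum>\<eta>\<in>?C. \<pi> \<eta> * ?r \<eta> e) = \<pi> e * (\<Sum>\<eta>\<in>?C. ?r e \<eta>)"
    using st unfolding bs_stationary_def by blast
  have "(\<Sum>\<eta>\<in>?C. \<pi> \<eta> * (\<Sum>e\<in>?C. ?r \<eta> e * (g e - g \<eta>)))
      = (\<Sum>\<eta>\<in>?C. \<Sum>e\<in>?C. \<pi> \<eta> * ?r \<eta> e * g e) - (\<Sum>\<eta>\<in>?C. \<pi> \<eta> * g \<eta> * (\<Sum>e\<in>?C. ?r \<eta> e))"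
    by (simp add: sum_distrib_left sum_subtractf right_diff_distrib algebra_simps)
  also have "(\<Sum>\<eta>\<in>?C. \<Sum>e\<in>?C. \<pi> \<eta> * ?r \<eta> e * g e) = (\<Sum>e\<in>?C. g e * (\<Sum>\<eta>\<in>?C. \<pi> \<eta> * ?r \<eta> e))"
    by (subst sum.swap) (simp add: sum_distrib_left algebra_simps)
  also have "\<dots> = (\<Sum>e\<in>?C. g e * (\<pi> e * (\<Sum>\<eta>\<in>?C. ?r e \<eta>)))"
    using bal by simp
  finally show ?thesis by (simp add: algebra_simps)
qed

lemma balance_one:
  assumes st: "bs_stationary V E p \<pi>"
  shows "\<pi> one * (\<Sum>e\<in>configs V - {one}. bs_rate V E p one e) \<le> real d + 1"
proof -
  let ?C = "configs V"
  let ?r = "bs_rate V E p"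
  have nn: "\<And>\<eta>. \<eta> \<in> ?C \<Longrightarrow> \<pi> \<eta> \<ge> 0" and s1: "(\<Sum>\<eta>\<in>?C. \<pi> \<eta>) = 1"
    and bal: "(\<Sum>\<eta>\<in>?C. \<pi> \<eta> * ?r \<eta> one) = \<pi> one * (\<Sum>\<eta>\<in>?C. ?r one \<eta>)"
    using st one_configs unfolding bs_stationary_def by auto
  have "(\<Sum>\<eta>\<in>?C. \<pi> \<eta> * ?r \<eta> one) = \<pi> one * ?r one one + (\<Sum>\<eta>\<in>?C - {one}. \<pi> \<eta> * ?r \<eta> one)"
    by (rule sum.remove[OF configs_fin one_configs])
  moreover have "(\<Sum>\<eta>\<in>?C. ?r one \<eta>) = ?r one one + (\<Sum>\<eta>\<in>?C - {one}. ?r one \<eta>)"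
    by (rule sum.remove[OF configs_fin one_configs])
  ultimately have eq: "\<pi> one * (\<Sum>e\<in>?C - {one}. ?r one e) = (\<Sum>\<eta>\<in>?C - {one}. \<pi> \<eta> * ?r \<eta> one)"
    using bal by (simp add: algebra_simps)
  also have "\<dots> \<le> (\<Sum>\<eta>\<in>?C - {one}. \<pi> \<eta> * (real d + 1))"
    using nn rate_to_one by (intro sum_mono mult_left_mono) auto
  also have "\<dots> = (real d + 1) * (\<Sum>\<eta>\<in>?C - {one}. \<pi> \<eta>)" by (metis mult.commute sum_distrib_right)
  also have "(\<Sum>\<eta>\<in>?C - {one}. \<pi> \<eta>) \<le> (\<Sum>\<eta>\<in>?C. \<pi> \<eta>)"
    using nn configs_fin by (intro sum_mono2) auto
  then have "(real d + 1) * (\<Sum>\<eta>\<in>?C - {one}. \<pi> \<eta>) \<le> (real d + 1) * 1"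
    using s1 by (intro mult_left_mono) auto
  finally show ?thesis by simp
qed

end

context bsm begin

lemma main:
  assumes st: "bs_stationary V E p \<pi>" and qq: "1 - p \<le> q0"
  shows "(\<Sum>\<eta>\<in>{\<eta> \<in> configs V. card (zeros V \<eta>) > k}. \<pi> \<eta>) \<le> c1f d * exp (- c2f d * real k)"
proof -
  let ?C = "configs V"
  let ?S = "configs V - {one}"
  let ?r = "bs_rate V E p"
  let ?L = "\<lambda>\<eta>. (\<Sum>e\<in>?C. ?r \<eta> e * (f e - f \<eta>))"
  let ?K = "exp (\<theta> * (real d + 1)) - 1"
  have nn: "\<And>\<eta>. \<eta> \<in> ?C \<Longrightarrow> \<pi> \<eta> \<ge> 0" using st unfolding bs_stationary_def by auto
  have Kpos: "?K > 0" using theta_pos by simp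
  have fpos: "f \<eta> > 0" for \<eta> by (simp add: f_def)
  have "0 = (\<Sum>\<eta>\<in>?C. \<pi> \<eta> * ?L \<eta>)" using stat_identity[OF st, of f] by simp
  also have "\<dots> = \<pi> one * ?L one + (\<Sum>\<eta>\<in>?S. \<pi> \<eta> * ?L \<eta>)"
    by (rule sum.remove[OF configs_fin one_configs])
  finally have z: "0 = \<pi> one * ?L one + (\<Sum>\<eta>\<in>?S. \<pi> \<eta> * ?L \<eta>)" .
  have a: "\<pi> one * ?L one \<le> ?K * (real d + 1)"
  proof -
    have "\<pi> one * ?L one \<le> \<pi> one * (?K * (\<Sum>e\<in>?S. ?r one e))"
      using Lf_one nn[OF one_configs] by (intro mult_left_mono) auto
    also have "\<dots> = ?K * (\<pi> one * (\<Sum>e\<in>?S. ?r one e))" by (simp add: algebra_simps)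
    also have "\<dots> \<le> ?K * (real d + 1)" using balance_one[OF st] Kpos by (intro mult_left_mono) auto
    finally show ?thesis .
  qed
  have b: "(\<Sum>\<eta>\<in>?S. \<pi> \<eta> * ?L \<eta>) \<le> - (\<theta> * eps / 2) * (\<Sum>\<eta>\<in>?S. \<pi> \<eta> * f \<eta>)"
  proof -
    have "(\<Sum>\<eta>\<in>?S. \<pi> \<eta> * ?L \<eta>) \<le> (\<Sum>\<eta>\<in>?S. \<pi> \<eta> * (- (\<theta> * eps / 2) * f \<eta>))"
    proof (intro sum_mono mult_left_mono)
      fix \<eta> assume h: "\<eta> \<in> ?S"
      then show "?L \<eta> \<le> - (\<theta> * eps / 2) * f \<eta>"
        using Lf_neg[OF _ ne_one_zero qq] by blast
      show "0 \<le> \<pi> \<eta>" using h nn by blast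
    qed
    also have "\<dots> = - (\<theta> * eps / 2) * (\<Sum>\<eta>\<in>?S. \<pi> \<eta> * f \<eta>)"
      by (simp add: sum_distrib_left algebra_simps)
    finally show ?thesis .
  qed
  have tpos: "\<theta> * eps / 2 > 0" using theta_pos eps_pos by simp
  have bound: "(\<Sum>\<eta>\<in>?S. \<pi> \<eta> * f \<eta>) \<le> c1f d"
  proof -
    have "(\<theta> * eps / 2) * (\<Sum>\<eta>\<in>?S. \<pi> \<eta> * f \<eta>) \<le> ?K * (real d + 1)" using z a b by linarith
    then have "(\<Sum>\<eta>\<in>?S. \<pi> \<eta> * f \<eta>) \<le> ?K * (real d + 1) / (\<theta> * eps / 2)"
      using tpos by (simp add: field_simps)
    also have "\<dots> = c1f d" unfolding c1f_def by (simp add: field_simps)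
    finally show ?thesis .
  qed
  have "(\<Sum>\<eta>\<in>{\<eta> \<in> ?C. card (zeros V \<eta>) > k}. \<pi> \<eta>)
      \<le> (\<Sum>\<eta>\<in>{\<eta> \<in> ?C. card (zeros V \<eta>) > k}. \<pi> \<eta> * f \<eta> * exp (- c2f d * real k))"
  proof (intro sum_mono)
    fix \<eta> assume h: "\<eta> \<in> {\<eta> \<in> ?C. card (zeros V \<eta>) > k}"
    then have k: "NN \<eta> \<ge> real k" using NN_card by simp
    have "\<theta> * (7/8 * real k) \<le> \<theta> * (7/8 * NN \<eta>)" using k theta_pos by (intro mult_left_mono) auto
    also have "\<dots> \<le> \<theta> * Phi \<eta>" using Phi_ge theta_pos by (intro mult_left_mono) auto
    finally have "c2f d * real k \<le> \<theta> * Phi \<eta>" unfolding c2f_def by (simp add: algebra_simps)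
    then have "exp (c2f d * real k) \<le> f \<eta>" unfolding f_def by simp
    then have "1 \<le> f \<eta> * exp (- c2f d * real k)"
      by (simp add: exp_minus field_simps)
    then have "\<pi> \<eta> * 1 \<le> \<pi> \<eta> * (f \<eta> * exp (- c2f d * real k))"
      using nn h by (intro mult_left_mono) auto
    then show "\<pi> \<eta> \<le> \<pi> \<eta> * f \<eta> * exp (- c2f d * real k)" by (simp add: algebra_simps)
  qed
  also have "\<dots> \<le> (\<Sum>\<eta>\<in>?S. \<pi> \<eta> * f \<eta> * exp (- c2f d * real k))"
  proof (rule sum_mono2)
    show "finite ?S" using configs_fin by simp
    show "{\<eta> \<in> ?C. card (zeros V \<eta>) > k} \<subseteq> ?S"
    proof
      fix \<eta> assume "\<eta> \<in> {\<eta> \<in> ?C. card (zeros V \<eta>) > k}"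
      moreover have "card (zeros V one) = 0" using NN_one NN_card by simp
      ultimately show "\<eta> \<in> ?S" by auto
    qed
    show "\<And>\<eta>. \<eta> \<in> ?S - {\<eta> \<in> ?C. card (zeros V \<eta>) > k} \<Longrightarrow> 0 \<le> \<pi> \<eta> * f \<eta> * exp (- c2f d * real k)"
    proof -
      fix \<eta> assume "\<eta> \<in> ?S - {\<eta> \<in> ?C. card (zeros V \<eta>) > k}"
      then have "\<pi> \<eta> \<ge> 0" using nn by auto
      moreover have "f \<eta> \<ge> 0" using fpos less_imp_le by blast
      ultimately show "0 \<le> \<pi> \<eta> * f \<eta> * exp (- c2f d * real k)" by simp
    qed
  qed
  also have "\<dots> = (\<Sum>\<eta>\<in>?S. \<pi> \<eta> * f \<eta>) * exp (- c2f d * real k)"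
    by (simp add: sum_distrib_right)
  also have "\<dots> \<le> c1f d * exp (- c2f d * real k)"
    using bound by (intro mult_right_mono) auto
  finally show ?thesis .
qed

end

lemma c1f_pos: "d \<ge> 1 \<Longrightarrow> c1f d > 0"
  unfolding c1f_def by (intro divide_pos_pos mult_pos_pos) (auto simp: thetaf_def epsf_def)

lemma c2f_pos: "c2f d > 0"
  unfolding c2f_def by (auto simp: thetaf_def epsf_def)

lemma q0f_gt: "q0f d > 1 / (real d + 1)"
  unfolding q0f_def by simp

theorem theorem3:
  "\<forall>d::nat. d \<ge> 1 \<longrightarrow>
     (\<exists>q0::real. q0 > 1 / (real d + 1) \<and>
       (\<exists>c1 c2::real. c1 > 0 \<and> c2 > 0 \<and>
         (\<forall>V E p \<pi>. conn_simple_graph V E \<longrightarrow> max_degree V E = d \<longrightarrow>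
            0 < p \<longrightarrow> p < 1 \<longrightarrow> 1 - p \<le> q0 \<longrightarrow>
            bs_stationary V E p \<pi> \<longrightarrow>
            (\<forall>k::nat. (\<Sum>\<eta>\<in>{\<eta> \<in> configs V. card (zeros V \<eta>) > k}. \<pi> \<eta>)
                        \<le> c1 * exp (- c2 * real k)))))"
proof (intro allI impI)
  fix d :: nat assume d: "d \<ge> 1"
  show "\<exists>q0::real. q0 > 1 / (real d + 1) \<and>
       (\<exists>c1 c2::real. c1 > 0 \<and> c2 > 0 \<and>
         (\<forall>V E p \<pi>. conn_simple_graph V E \<longrightarrow> max_degree V E = d \<longrightarrow>
            0 < p \<longrightarrow> p < 1 \<longrightarrow> 1 - p \<le> q0 \<longrightarrow>
            bs_stationary V E p \<pi> \<longrightarrow>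
            (\<forall>k::nat. (\<Sum>\<eta>\<in>{\<eta> \<in> configs V. card (zeros V \<eta>) > k}. \<pi> \<eta>)
                        \<le> c1 * exp (- c2 * real k))))"
  proof (intro exI conjI allI impI)
    show "q0f d > 1 / (real d + 1)" by (rule q0f_gt)
    show "c1f d > 0" using d by (rule c1f_pos)
    show "c2f d > 0" by (rule c2f_pos)
    fix V E p \<pi> k
    assume G: "conn_simple_graph V E" and deg: "max_degree V E = d" and p0: "0 < p" and p1: "p < 1"
      and qq: "1 - p \<le> q0f d" and st: "bs_stationary V E p \<pi>"
    interpret bsm V E p d using G deg d p0 p1 by unfold_locales
    show "(\<Sum>\<eta>\<in>{\<eta> \<in> configs V. card (zeros V \<eta>) > k}. \<pi> \<eta>) \<le> c1f d * exp (- c2f d * real k)"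
      by (rule main[OF st qq])
  qed
qed

end
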